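(* Let $L$ be an interval locale and $F$ a presheaf of monomorphisms on $L_{+}$. Then the canonical map $\eta:F\to LF$ is a sectionwise monomorphism; hence $F$ is a separated presheaf and $LF$ is the associated sheaf of $F$.
   Context: A locale $L$ is a complete lattice in which finite meets distribute over arbitrary joins, with Grothendieck topology: $\{b_j\le a\}$ covers $a$ iff $\bigvee_j b_j=a$. $L$ is an interval if it is totally ordered and densely ordered ($a<b$ implies there is $s$ with $a<s<b$). $i$ is the bottom element of $L$; $L_{+}=L\sqcup\{0\}$ with a new bottom $0<i$. A presheaf of monomorphisms on $L_{+}$ is a functor $F:(L_{+})^{op}\to\mathbf{Set}$ with $F(0)=\ast$ and $F(b)\to F(a)$ injective for all $a\le b$ in $L$. For a presheaf $F$ on $L_{+}$, $LF$ is the presheaf with $LF(a)=\varprojlim_{0<b<a}F(b)$ for $a\in L$, $a\neq i$, $LF(i)=F(i)$, $LF(0)=\ast$, and $\eta:F\to LF$ the canonical map. A presheaf $F$ is separated if $\eta$ is a sectionwise monomorphism. *)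

theory Defs
  imports Main
begin

text \<open>The locale L is a type 'l of class complete_linorder (a totally ordered complete
lattice is automatically a frame).  L_+ is 'l option, with None the new bottom 0.
A presheaf on L_+ is a pair (F, r): F a is the set of sections over a, and
r b a : F b \<rightarrow> F a is restriction for a \<le> b.\<close>

definition le_plus :: "'l::order option \<Rightarrow> 'l option \<Rightarrow> bool" where
  "le_plus x y \<longleftrightarrow> (case x of None \<Rightarrow> True
      | Some a \<Rightarrow> (case y of None \<Rightarrow> False | Some b \<Rightarrow> a \<le> b))"

definition presheaf :: "('l::order option \<Rightarrow> 'x set) \<Rightarrow> ('l option \<Rightarrow> 'l option \<Rightarrow> 'x \<Rightarrow> 'x) \<Rightarrow> bool" where
  "presheaf F r \<longleftrightarrow>
     (\<forall>a b. le_plus a b \<longrightarrow> (\<forall>x\<in>F b. r b a x \<in> F a)) \<and>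
     (\<forall>a. \<forall>x\<in>F a. r a a x = x) \<and>
     (\<forall>a b c. le_plus a b \<and> le_plus b c \<longrightarrow> (\<forall>x\<in>F c. r b a (r c b x) = r c a x))"

definition presheaf_of_monos :: "('l::order option \<Rightarrow> 'x set) \<Rightarrow> ('l option \<Rightarrow> 'l option \<Rightarrow> 'x \<Rightarrow> 'x) \<Rightarrow> bool" where
  "presheaf_of_monos F r \<longleftrightarrow> presheaf F r \<and> (\<exists>u. F None = {u}) \<and>
     (\<forall>a b. a \<le> b \<longrightarrow> inj_on (r (Some b) (Some a)) (F (Some b)))"

text \<open>Indices b of the diagram defining LF(a): for a \<noteq> i these are 0 < b < a;
for a = i (bottom of L) we use the single index i, so that LF(i) is a canonical copy of F(i).\<close>

fun below :: "'l::complete_linorder option \<Rightarrow> 'l \<Rightarrow> bool" where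
  "below None b = False"
| "below (Some a) b = (b < a \<or> (a = bot \<and> b = bot))"

definition LF :: "('l::complete_linorder option \<Rightarrow> 'x set) \<Rightarrow> ('l option \<Rightarrow> 'l option \<Rightarrow> 'x \<Rightarrow> 'x)
    \<Rightarrow> 'l option \<Rightarrow> ('l \<Rightarrow> 'x) set" where
  "LF F r a = {s. (\<forall>b. below a b \<longrightarrow> s b \<in> F (Some b)) \<and>
                  (\<forall>b c. below a b \<and> c \<le> b \<longrightarrow> r (Some b) (Some c) (s b) = s c) \<and>
                  (\<forall>b. \<not> below a b \<longrightarrow> s b = undefined)}"

definition LFres :: "'l::complete_linorder option \<Rightarrow> 'l option \<Rightarrow> ('l \<Rightarrow> 'x) \<Rightarrow> ('l \<Rightarrow> 'x)" where
  "LFres a a' s = (\<lambda>b. if below a' b then s b else undefined)"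

definition eta :: "('l::complete_linorder option \<Rightarrow> 'l option \<Rightarrow> 'x \<Rightarrow> 'x) \<Rightarrow> 'l option \<Rightarrow> 'x \<Rightarrow> ('l \<Rightarrow> 'x)" where
  "eta r a x = (\<lambda>b. if below a b then r a (Some b) x else undefined)"

definition separated :: "('l::complete_linorder option \<Rightarrow> 'x set) \<Rightarrow> ('l option \<Rightarrow> 'l option \<Rightarrow> 'x \<Rightarrow> 'x) \<Rightarrow> bool" where
  "separated F r \<longleftrightarrow> (\<forall>a. inj_on (eta r a) (F a))"

definition sup_plus :: "'l::complete_linorder option set \<Rightarrow> 'l option" where
  "sup_plus S = (if \<exists>b. Some b \<in> S then Some (Sup {b. Some b \<in> S}) else None)"

text \<open>Sheaf for the canonical topology: S \<subseteq> down(a) covers a iff its join is a.\<close>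
definition sheaf :: "('l::complete_linorder option \<Rightarrow> 'y set) \<Rightarrow> ('l option \<Rightarrow> 'l option \<Rightarrow> 'y \<Rightarrow> 'y) \<Rightarrow> bool" where
  "sheaf G g \<longleftrightarrow> presheaf G g \<and>
     (\<forall>a S. (\<forall>b\<in>S. le_plus b a) \<and> sup_plus S = a \<longrightarrow>
        (\<forall>x. (\<forall>b\<in>S. x b \<in> G b) \<and>
             (\<forall>b\<in>S. \<forall>b'\<in>S. \<forall>c. le_plus c b \<and> le_plus c b' \<longrightarrow> g b c (x b) = g b' c (x b'))
           \<longrightarrow> (\<exists>!y. y \<in> G a \<and> (\<forall>b\<in>S. g a b y = x b))))"

definition psh_morphism :: "('l::order option \<Rightarrow> 'x set) \<Rightarrow> ('l option \<Rightarrow> 'l option \<Rightarrow> 'x \<Rightarrow> 'x)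
    \<Rightarrow> ('l option \<Rightarrow> 'y set) \<Rightarrow> ('l option \<Rightarrow> 'l option \<Rightarrow> 'y \<Rightarrow> 'y) \<Rightarrow> ('l option \<Rightarrow> 'x \<Rightarrow> 'y) \<Rightarrow> bool" where
  "psh_morphism F r G g \<phi> \<longleftrightarrow> (\<forall>a. \<forall>x\<in>F a. \<phi> a x \<in> G a) \<and>
     (\<forall>a b. le_plus a b \<longrightarrow> (\<forall>x\<in>F b. \<phi> a (r b a x) = g b a (\<phi> b x)))"

end

theory Submission
  imports Defs
begin

lemma le_plus_simps[simp]: "le_plus None y" "le_plus (Some a) None = False"
  "le_plus (Some a) (Some b) = (a \<le> b)"
  by (simp_all add: le_plus_def)

lemma below_le: "below (Some a) (c::'l::complete_linorder) \<Longrightarrow> c \<le> a"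
  by (elim below.elims) (auto simp: less_imp_le)

lemma below_mono:
  assumes ab: "le_plus a b" and ac: "below a (c::'l::complete_linorder)"
  shows "below b c"
proof (cases a)
  case None then show ?thesis using ac by simp
next
  case (Some a')
  then obtain b' where b: "b = Some b'" "a' \<le> b'" using ab by (cases b) auto
  show ?thesis
  proof (cases "c < a'")
    case True then have "c < b'" using b(2) by (rule less_le_trans)
    then show ?thesis using b(1) by simp
  next
    case False then have "c = bot" using ac Some by simp
    then show ?thesis using b(1) by (cases "b' = bot") (simp_all add: bot_less)
  qed
qed

lemma below_down:
  assumes ac: "below a (c::'l::complete_linorder)" and ec: "e \<le> c"
  shows "below a e"
proof (cases a)
  case None then show ?thesis using ac by simp
next
  case (Some a')
  show ?thesis
  proof (cases "c < a'")
    case True then have "e < a'" using le_less_trans[OF ec True] by simp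
    then show ?thesis using Some by simp
  next
    case False then have "c = bot" "a' = bot" using ac Some by simp_all
    then have "e = bot" using ec by (simp add: bot_unique)
    then show ?thesis using Some \<open>a' = bot\<close> by simp
  qed
qed

lemma below_le_plus: "below a (c::'l::complete_linorder) \<Longrightarrow> le_plus (Some c) a"
  by (cases a) (simp_all add: below_le)

lemma below_Some_iff: "a \<noteq> bot \<Longrightarrow> below (Some a) (c::'l::complete_linorder) = (c < a)"
  by simp

lemma LF_memD:
  assumes "s \<in> LF F r a"
  shows "\<And>b. below a b \<Longrightarrow> s b \<in> F (Some b)"
    "\<And>b c. below a b \<Longrightarrow> c \<le> b \<Longrightarrow> r (Some b) (Some c) (s b) = s c"
    "\<And>b. \<not> below a b \<Longrightarrow> s b = undefined"
  using assms by (auto simp: LF_def)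

lemma LF_None: "LF F r None = {\<lambda>_. undefined}"
  by (auto simp: LF_def)

context
  fixes F :: "'l::complete_linorder option \<Rightarrow> 'x set"
    and r :: "'l option \<Rightarrow> 'l option \<Rightarrow> 'x \<Rightarrow> 'x"
  assumes pm: "presheaf_of_monos F r"
begin

lemma psh: "presheaf F r" using pm unfolding presheaf_of_monos_def by (rule conjunct1)
lemma rF: "le_plus a b \<Longrightarrow> x \<in> F b \<Longrightarrow> r b a x \<in> F a"
  by (rule conjunct1[OF psh[unfolded presheaf_def], rule_format])
lemma rid: "x \<in> F a \<Longrightarrow> r a a x = x"
  by (rule conjunct1[OF conjunct2[OF psh[unfolded presheaf_def]], rule_format])
lemma rcomp: "le_plus a b \<Longrightarrow> le_plus b c \<Longrightarrow> x \<in> F c \<Longrightarrow> r b a (r c b x) = r c a x"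
  by (rule conjunct2[OF conjunct2[OF psh[unfolded presheaf_def]], rule_format, OF conjI])
lemma rinj: "a \<le> b \<Longrightarrow> inj_on (r (Some b) (Some a)) (F (Some b))"
  by (rule conjunct2[OF conjunct2[OF pm[unfolded presheaf_of_monos_def]], rule_format])
lemma Fnone: "\<exists>u. F None = {u}"
  by (rule conjunct1[OF conjunct2[OF pm[unfolded presheaf_of_monos_def]]])

lemma sep_point:
  assumes "x \<in> F (Some c)" "y \<in> F (Some c)" "bot < c"
    "\<And>d. d < c \<Longrightarrow> r (Some c) (Some d) x = r (Some c) (Some d) y"
  shows "x = y"
proof -
  have "r (Some c) (Some bot) x = r (Some c) (Some bot) y" using assms(3,4) by blast
  then show ?thesis using inj_onD[OF rinj[of bot c]] assms(1,2) by simp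
qed

lemma LF_sheaf: "sheaf (LF F r) LFres"
  unfolding sheaf_def
proof (intro conjI allI impI)
  show "presheaf (LF F r) LFres"
    unfolding presheaf_def
  proof (intro conjI allI impI ballI)
    fix a b s assume ab: "le_plus a b" and s: "s \<in> LF F r b"
    show "LFres b a s \<in> LF F r a"
      unfolding LF_def
    proof (intro CollectI conjI allI impI)
      fix c assume c: "below a c"
      then have "below b c" using below_mono[OF ab] by blast
      then show "LFres b a s c \<in> F (Some c)" using LF_memD(1)[OF s] c by (simp add: LFres_def)
    next
      fix c e assume ce: "below a c \<and> e \<le> c"
      then have "below b c" "below a e" "below b e" using below_mono[OF ab] below_down by blast+
      then show "r (Some c) (Some e) (LFres b a s c) = LFres b a s e"
        using LF_memD(2)[OF s] ce by (simp add: LFres_def)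
    next
      fix c assume "\<not> below a c" then show "LFres b a s c = undefined" by (simp add: LFres_def)
    qed
  next
    fix a s assume s: "s \<in> LF F r a"
    show "LFres a a s = s" using LF_memD(3)[OF s] unfolding LFres_def by auto
  next
    fix a b c s assume abc: "le_plus a b \<and> le_plus b c" "s \<in> LF F r c"
    show "LFres b a (LFres c b s) = LFres c a s"
      using below_mono[of a b] abc unfolding LFres_def by (simp add: fun_eq_iff)
  qed
next
  fix a :: "'l option" and S :: "'l option set" and x :: "'l option \<Rightarrow> 'l \<Rightarrow> 'x"
  assume cov: "(\<forall>b\<in>S. le_plus b a) \<and> sup_plus S = a"
  assume fam: "(\<forall>b\<in>S. x b \<in> LF F r b) \<and>
      (\<forall>b\<in>S. \<forall>b'\<in>S. \<forall>c. le_plus c b \<and> le_plus c b' \<longrightarrow> LFres b c (x b) = LFres b' c (x b'))"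
  have xLF: "\<And>b. b \<in> S \<Longrightarrow> x b \<in> LF F r b" using fam by blast
  have F2: "\<And>b b' c. b\<in>S \<Longrightarrow> b'\<in>S \<Longrightarrow> le_plus c b \<Longrightarrow> le_plus c b' \<Longrightarrow> LFres b c (x b) = LFres b' c (x b')"
    using fam by blast
  have ex: "\<exists>b. Some b \<in> S \<and> below (Some b) c" if bac: "below a c" for c
  proof -
    obtain a' where a': "a = Some a'" using bac by (cases a) auto
    have ne: "\<exists>b. Some b \<in> S" and sup: "Sup {b. Some b \<in> S} = a'"
      using cov a' unfolding sup_plus_def by (auto split: if_splits)
    show ?thesis
    proof (cases "c < a'")
      case True
      then obtain b where "Some b \<in> S" "c < b" using sup by (auto simp: less_Sup_iff)
      then show ?thesis by auto
    next
      case False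
      then have "a' = bot" "c = bot" using bac a' by auto
      then obtain b where b: "Some b \<in> S" using ne by auto
      then have "b \<le> a'" using sup by (metis Sup_upper mem_Collect_eq)
      then show ?thesis using b \<open>a' = bot\<close> \<open>c = bot\<close> by (auto simp: bot_unique)
    qed
  qed
  have agree: "x (Some b) d = x (Some b') d"
    if b: "Some b \<in> S" "Some b' \<in> S" "below (Some b) d" "below (Some b') d" for b b' d
  proof -
    have bd: "d \<le> b" "d \<le> b'" using b below_le by blast+
    have comp: "LFres (Some b) (Some d) (x (Some b)) = LFres (Some b') (Some d) (x (Some b'))"
      by (rule F2) (use b bd in auto)
    have ce: "x (Some b) e = x (Some b') e" if "below (Some d) e" for e
      using fun_cong[OF comp, of e] that unfolding LFres_def by auto
    show ?thesis
    proof (cases "d = bot")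
      case True then show ?thesis using ce by simp
    next
      case False
      then have db: "bot < d" using bot.not_eq_extremum by blast
      show ?thesis
      proof (rule sep_point)
        show "x (Some b) d \<in> F (Some d)" "x (Some b') d \<in> F (Some d)"
          using LF_memD(1)[OF xLF] b by blast+
        show "bot < d" by fact
        fix e assume "e < d"
        then have "r (Some d) (Some e) (x (Some b) d) = x (Some b) e"
             "r (Some d) (Some e) (x (Some b') d) = x (Some b') e"
          using LF_memD(2)[OF xLF] b by auto
        then show "r (Some d) (Some e) (x (Some b) d) = r (Some d) (Some e) (x (Some b') d)"
          using ce[of e] \<open>e < d\<close> by auto
      qed
    qed
  qed
  define pick where "pick c = (SOME b. Some b \<in> S \<and> below (Some b) c)" for c
  have pick: "Some (pick c) \<in> S \<and> below (Some (pick c)) c" if "below a c" for c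
    unfolding pick_def using someI_ex[OF ex[OF that]] .
  define y where "y c = (if below a c then x (Some (pick c)) c else undefined)" for c
  have yval: "y d = x (Some b) d" if "Some b \<in> S" "below (Some b) d" for b d
  proof -
    have "below a d" using below_mono[OF _ that(2)] cov that(1) by blast
    then show ?thesis unfolding y_def using agree[OF _ that(1) _ that(2)] pick by auto
  qed
  have yLF: "y \<in> LF F r a"
    unfolding LF_def
  proof (intro CollectI conjI allI impI)
    fix c assume "below a c"
    then show "y c \<in> F (Some c)" using pick[of c] LF_memD(1)[OF xLF] y_def by auto
  next
    fix c e assume ce: "below a c \<and> e \<le> c"
    then have p: "Some (pick c) \<in> S" "below (Some (pick c)) c" using pick by auto
    have "below (Some (pick c)) e" using below_down p ce by blast
    then show "r (Some c) (Some e) (y c) = y e"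
      using yval[OF p] yval[OF p(1)] LF_memD(2)[OF xLF[OF p(1)]] p ce by auto
  next
    fix c assume "\<not> below a c" then show "y c = undefined" by (simp add: y_def)
  qed
  have yres: "LFres a b y = x b" if "b \<in> S" for b
  proof
    fix d
    show "LFres a b y d = x b d"
    proof (cases b)
      case None
      then show ?thesis using xLF[OF that] by (simp add: LFres_def LF_None)
    next
      case (Some b')
      then show ?thesis using yval[of b' d] that LF_memD(3)[OF xLF[OF that]]
        unfolding LFres_def by auto
    qed
  qed
  show "\<exists>!y. y \<in> LF F r a \<and> (\<forall>b\<in>S. LFres a b y = x b)"
  proof (rule ex1I[of _ y])
    show "y \<in> LF F r a \<and> (\<forall>b\<in>S. LFres a b y = x b)" using yLF yres by blast
  next
    fix y' assume y': "y' \<in> LF F r a \<and> (\<forall>b\<in>S. LFres a b y' = x b)"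
    show "y' = y"
    proof
      fix d
      show "y' d = y d"
      proof (cases "below a d")
        case True
        then obtain b where b: "Some b \<in> S" "below (Some b) d" using ex by blast
        have "LFres a (Some b) y' d = x (Some b) d" using y' b by auto
        then show ?thesis using yval[OF b] b unfolding LFres_def by auto
      next
        case False
        then show ?thesis using LF_memD(3) y' yLF by metis
      qed
    qed
  qed
qed


lemma LFres_LF: "le_plus a b \<Longrightarrow> s \<in> LF F r b \<Longrightarrow> LFres b a s \<in> LF F r a"
  by (rule conjunct1[OF conjunct1[OF LF_sheaf[unfolded sheaf_def], unfolded presheaf_def], rule_format])

lemma eta_LF: assumes x: "x \<in> F a" shows "eta r a x \<in> LF F r a"
  unfolding LF_def
proof (intro CollectI conjI allI impI)
  fix b assume b: "below a b"
  then show "eta r a x b \<in> F (Some b)" using rF[OF below_le_plus[OF b] x] by (simp add: eta_def)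
next
  fix b c assume bc: "below a b \<and> c \<le> b"
  then have "below a c" using below_down by blast
  moreover have "r (Some b) (Some c) (r a (Some b) x) = r a (Some c) x"
    using rcomp[OF _ _ x, of "Some c" "Some b"] bc below_le_plus[of a b] by simp
  ultimately show "r (Some b) (Some c) (eta r a x b) = eta r a x c" using bc by (simp add: eta_def)
next
  fix b assume "\<not> below a b" then show "eta r a x b = undefined" by (simp add: eta_def)
qed

lemma eta_inj: "inj_on (eta r a) (F a)"
proof (rule inj_onI)
  fix x y assume x: "x \<in> F a" and y: "y \<in> F a" and e: "eta r a x = eta r a y"
  show "x = y"
  proof (cases a)
    case None
    then show ?thesis using Fnone x y by force
  next
    case (Some a')
    have bb: "below (Some a') bot" by (cases "a' = bot") (simp_all add: bot_less)
    have eq: "r (Some a') (Some bot) x = r (Some a') (Some bot) y"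
      using fun_cong[OF e, of bot] bb Some by (simp add: eta_def)
    show ?thesis using inj_onD[OF rinj[of bot a', OF bot_least] eq] x y Some by simp
  qed
qed

lemma eta_mor: "psh_morphism F r (LF F r) LFres (eta r)"
  unfolding psh_morphism_def
proof (intro conjI allI impI ballI)
  fix a x assume "x \<in> F a" then show "eta r a x \<in> LF F r a" by (rule eta_LF)
next
  fix a b x assume ab: "le_plus a b" and x: "x \<in> F b"
  show "eta r a (r b a x) = LFres b a (eta r b x)"
  proof (rule ext)
    fix d
    show "eta r a (r b a x) d = LFres b a (eta r b x) d"
    proof (cases "below a d")
      case True
      then have "below b d" using below_mono[OF ab] by blast
      moreover have "r a (Some d) (r b a x) = r b (Some d) x"
        using rcomp[OF below_le_plus[OF True] ab x] .
      ultimately show ?thesis using True by (simp add: eta_def LFres_def)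
    qed (simp add: eta_def LFres_def)
  qed
qed

lemma Sup_below:
  assumes dense: "\<forall>a b::'l. a < b \<longrightarrow> (\<exists>s. a < s \<and> s < b)"
  shows "Sup {c. c < (a::'l)} = a"
proof (rule antisym)
  show "Sup {c. c < a} \<le> a" by (rule Sup_least) auto
  show "a \<le> Sup {c. c < a}"
  proof (rule ccontr)
    assume "\<not> a \<le> Sup {c. c < a}"
    then have "Sup {c. c < a} < a" by simp
    then obtain t where t: "Sup {c. c < a} < t" "t < a" using dense by blast
    then have "t \<le> Sup {c. c < a}" by (intro Sup_upper) simp
    then show False using t by simp
  qed
qed

context
  fixes G :: "'l option \<Rightarrow> 'y set" and g and \<phi>
  assumes dense: "\<forall>a b::'l. a < b \<longrightarrow> (\<exists>s. a < s \<and> s < b)"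
    and sh: "sheaf G g" and mor: "psh_morphism F r G g \<phi>"
begin

lemma pshG: "presheaf G g" using sh unfolding sheaf_def by (rule conjunct1)
lemma gF: "le_plus a b \<Longrightarrow> x \<in> G b \<Longrightarrow> g b a x \<in> G a"
  by (rule conjunct1[OF pshG[unfolded presheaf_def], rule_format])
lemma gid: "x \<in> G a \<Longrightarrow> g a a x = x"
  by (rule conjunct1[OF conjunct2[OF pshG[unfolded presheaf_def]], rule_format])
lemma gcomp: "le_plus a b \<Longrightarrow> le_plus b c \<Longrightarrow> x \<in> G c \<Longrightarrow> g b a (g c b x) = g c a x"
  by (rule conjunct2[OF conjunct2[OF pshG[unfolded presheaf_def]], rule_format, OF conjI])
lemma shG: "(\<forall>b\<in>S. le_plus b a) \<Longrightarrow> sup_plus S = a \<Longrightarrow> (\<forall>b\<in>S. x b \<in> G b) \<Longrightarrow>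
   (\<forall>b\<in>S. \<forall>b'\<in>S. \<forall>c. le_plus c b \<and> le_plus c b' \<longrightarrow> g b c (x b) = g b' c (x b')) \<Longrightarrow>
   \<exists>!y. y \<in> G a \<and> (\<forall>b\<in>S. g a b y = x b)"
  by (rule conjunct2[OF sh[unfolded sheaf_def], rule_format, OF conjI conjI])
lemma phiF: "x \<in> F a \<Longrightarrow> \<phi> a x \<in> G a"
  by (rule conjunct1[OF mor[unfolded psh_morphism_def], rule_format])
lemma phinat: "le_plus a b \<Longrightarrow> x \<in> F b \<Longrightarrow> \<phi> a (r b a x) = g b a (\<phi> b x)"
  by (rule conjunct2[OF mor[unfolded psh_morphism_def], rule_format])

lemma ex1_char:
  assumes s: "s \<in> LF F r a"
  shows "\<exists>!y. y \<in> G a \<and> (\<forall>c. below a c \<longrightarrow> g a (Some c) y = \<phi> (Some c) (s c))"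
proof (cases a)
  case None
  have "\<exists>!y. y \<in> G None \<and> (\<forall>b\<in>{}. g None b y = (\<lambda>_. undefined) b)"
    by (rule shG) (auto simp: sup_plus_def)
  then show ?thesis using None by simp
next
  case (Some a')
  show ?thesis
  proof (cases "a' = bot")
    case True
    have sb: "s bot \<in> F (Some bot)" using LF_memD(1)[OF s] Some True by simp
    show ?thesis
    proof (rule ex1I[of _ "\<phi> (Some bot) (s bot)"])
      show "\<phi> (Some bot) (s bot) \<in> G a \<and> (\<forall>c. below a c \<longrightarrow> g a (Some c) (\<phi> (Some bot) (s bot)) = \<phi> (Some c) (s c))"
        using phiF[OF sb] gid Some True by auto
    next
      fix y assume y: "y \<in> G a \<and> (\<forall>c. below a c \<longrightarrow> g a (Some c) y = \<phi> (Some c) (s c))"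
      then have "g a (Some bot) y = \<phi> (Some bot) (s bot)" using Some True by auto
      then show "y = \<phi> (Some bot) (s bot)" using gid y Some True by auto
    qed
  next
    case False
    define S where "S = Some ` {c. c < a'}"
    define x where "x b = \<phi> b (s (the b))" for b
    have sc: "s c \<in> F (Some c)" if "c < a'" for c using LF_memD(1)[OF s] that Some by simp
    have hlp: "g (Some c1) c (x (Some c1)) = (case c of None \<Rightarrow> \<phi> None (SOME u. F None = {u}) | Some c3 \<Rightarrow> \<phi> (Some c3) (s c3))"
      if c1: "c1 < a'" "le_plus c (Some c1)" for c1 c
    proof (cases c)
      case None
      have "r (Some c1) None (s c1) \<in> F None" using rF[OF _ sc[OF c1(1)]] None by simp
      then have "r (Some c1) None (s c1) = (SOME u. F None = {u})" using Fnone
        by (metis (mono_tags, lifting) singletonD someI_ex)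
      then show ?thesis using phinat[of None "Some c1" "s c1"] sc[OF c1(1)] None by (simp add: x_def)
    next
      case (Some c3)
      have "r (Some c1) (Some c3) (s c1) = s c3" using LF_memD(2)[OF s] c1 \<open>a = Some a'\<close> Some by simp
      then show ?thesis using phinat[of "Some c3" "Some c1" "s c1"] sc[OF c1(1)] c1 Some by (simp add: x_def)
    qed
    have "\<exists>!y. y \<in> G a \<and> (\<forall>b\<in>S. g a b y = x b)"
    proof (rule shG)
      show "\<forall>b\<in>S. le_plus b a" using Some by (auto simp: S_def)
      have "bot < a'" using False bot.not_eq_extremum by blast
      then have "\<exists>b. Some b \<in> S" by (auto simp: S_def)
      moreover have "{b. Some b \<in> S} = {c. c < a'}" by (auto simp: S_def)
      ultimately show "sup_plus S = a" using Sup_below[OF dense] Some by (simp add: sup_plus_def)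
      show "\<forall>b\<in>S. x b \<in> G b" using phiF sc by (auto simp: S_def x_def)
      show "\<forall>b\<in>S. \<forall>b'\<in>S. \<forall>c. le_plus c b \<and> le_plus c b' \<longrightarrow> g b c (x b) = g b' c (x b')"
        using hlp by (auto simp: S_def)
    qed
    moreover have "(\<forall>b\<in>S. g a b y = x b) \<longleftrightarrow> (\<forall>c. below a c \<longrightarrow> g a (Some c) y = \<phi> (Some c) (s c))" for y
      using Some False by (auto simp: S_def x_def)
    ultimately show ?thesis by simp
  qed
qed

definition psi where "psi a s = (THE y. y \<in> G a \<and> (\<forall>c. below a c \<longrightarrow> g a (Some c) y = \<phi> (Some c) (s c)))"

lemma psi_char: "s \<in> LF F r a \<Longrightarrow> psi a s \<in> G a \<and> (\<forall>c. below a c \<longrightarrow> g a (Some c) (psi a s) = \<phi> (Some c) (s c))"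
  unfolding psi_def by (rule theI') (rule ex1_char)

lemma psi_unique: "s \<in> LF F r a \<Longrightarrow> y \<in> G a \<Longrightarrow> (\<forall>c. below a c \<longrightarrow> g a (Some c) y = \<phi> (Some c) (s c)) \<Longrightarrow> y = psi a s"
  using ex1_char psi_char by blast

lemma univ:
  "\<exists>\<psi>. psh_morphism (LF F r) LFres G g \<psi>
                 \<and> (\<forall>a. \<forall>x\<in>F a. \<psi> a (eta r a x) = \<phi> a x)
                 \<and> (\<forall>\<psi>'. psh_morphism (LF F r) LFres G g \<psi>'
                         \<and> (\<forall>a. \<forall>x\<in>F a. \<psi>' a (eta r a x) = \<phi> a x)
                       \<longrightarrow> (\<forall>a. \<forall>s\<in>LF F r a. \<psi>' a s = \<psi> a s))"
proof (rule exI[of _ psi], intro conjI allI impI ballI)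
  show "psh_morphism (LF F r) LFres G g psi"
    unfolding psh_morphism_def
  proof (intro conjI allI impI ballI)
    fix a s assume "s \<in> LF F r a" then show "psi a s \<in> G a" using psi_char by blast
  next
    fix a b s assume ab: "le_plus a b" and s: "s \<in> LF F r b"
    have y: "psi b s \<in> G b" "\<And>c. below b c \<Longrightarrow> g b (Some c) (psi b s) = \<phi> (Some c) (s c)"
      using psi_char[OF s] by auto
    show "psi a (LFres b a s) = g b a (psi b s)"
    proof (rule psi_unique[symmetric])
      show "LFres b a s \<in> LF F r a" using LFres_LF[OF ab s] .
      show "g b a (psi b s) \<in> G a" using gF[OF ab y(1)] .
      show "\<forall>c. below a c \<longrightarrow> g a (Some c) (g b a (psi b s)) = \<phi> (Some c) (LFres b a s c)"
      proof (intro allI impI)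
        fix c assume c: "below a c"
        have "g a (Some c) (g b a (psi b s)) = g b (Some c) (psi b s)"
          using gcomp[OF below_le_plus[OF c] ab y(1)] .
        also have "\<dots> = \<phi> (Some c) (s c)" using y(2) below_mono[OF ab c] by blast
        finally show "g a (Some c) (g b a (psi b s)) = \<phi> (Some c) (LFres b a s c)"
          using c by (simp add: LFres_def)
      qed
    qed
  qed
next
  fix a x assume x: "x \<in> F a"
  show "psi a (eta r a x) = \<phi> a x"
  proof (rule psi_unique[symmetric])
    show "eta r a x \<in> LF F r a" using eta_LF[OF x] .
    show "\<phi> a x \<in> G a" using phiF[OF x] .
    show "\<forall>c. below a c \<longrightarrow> g a (Some c) (\<phi> a x) = \<phi> (Some c) (eta r a x c)"
    proof (intro allI impI)
      fix c assume c: "below a c"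
      show "g a (Some c) (\<phi> a x) = \<phi> (Some c) (eta r a x c)"
        using phinat[OF below_le_plus[OF c] x] c by (simp add: eta_def)
    qed
  qed
next
  fix \<psi>' a s
  assume H: "psh_morphism (LF F r) LFres G g \<psi>' \<and> (\<forall>a. \<forall>x\<in>F a. \<psi>' a (eta r a x) = \<phi> a x)"
  assume s: "s \<in> LF F r a"
  have H0: "psh_morphism (LF F r) LFres G g \<psi>'" using H by (rule conjunct1)
  have H1: "\<And>a s. s \<in> LF F r a \<Longrightarrow> \<psi>' a s \<in> G a"
    using conjunct1[OF H0[unfolded psh_morphism_def]] by simp
  have H2: "\<And>a b s. le_plus a b \<Longrightarrow> s \<in> LF F r b \<Longrightarrow> \<psi>' a (LFres b a s) = g b a (\<psi>' b s)"
    using conjunct2[OF H0[unfolded psh_morphism_def]] by simp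
  have H3: "\<And>a x. x \<in> F a \<Longrightarrow> \<psi>' a (eta r a x) = \<phi> a x"
    using conjunct2[OF H] by simp
  have m1: "\<psi>' a s \<in> G a" using H1[OF s] .
  show "\<psi>' a s = psi a s"
  proof (rule psi_unique[OF s m1], intro allI impI)
    fix c assume c: "below a c"
    have "g a (Some c) (\<psi>' a s) = \<psi>' (Some c) (LFres a (Some c) s)"
      using H2[OF below_le_plus[OF c] s] by simp
    also have "LFres a (Some c) s = eta r (Some c) (s c)"
    proof (rule ext)
      fix d show "LFres a (Some c) s d = eta r (Some c) (s c) d"
      proof (cases "below (Some c) d")
        case True
        then show ?thesis using LF_memD(2)[OF s c below_le[OF True]] below_down[OF c below_le[OF True]]
          unfolding LFres_def eta_def by simp
      qed (simp add: LFres_def eta_def del: below.simps)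
    qed
    also have "\<psi>' (Some c) (eta r (Some c) (s c)) = \<phi> (Some c) (s c)"
      using H3[OF LF_memD(1)[OF s c]] .
    finally show "g a (Some c) (\<psi>' a s) = \<phi> (Some c) (s c)" .
  qed
qed

end
end

theorem corollary21:
  fixes F :: "'l::complete_linorder option \<Rightarrow> 'x set"
    and r :: "'l option \<Rightarrow> 'l option \<Rightarrow> 'x \<Rightarrow> 'x"
  assumes dense: "\<forall>a b::'l. a < b \<longrightarrow> (\<exists>s. a < s \<and> s < b)"
    and mono: "presheaf_of_monos F r"
  shows "(\<forall>a. inj_on (eta r a) (F a))
       \<and> separated F r
       \<and> psh_morphism F r (LF F r) LFres (eta r)
       \<and> sheaf (LF F r) LFres
       \<and> (\<forall>(G :: 'l option \<Rightarrow> 'y set) g \<phi>. sheaf G g \<and> psh_morphism F r G g \<phi> \<longrightarrow>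
            (\<exists>\<psi>. psh_morphism (LF F r) LFres G g \<psi>
                 \<and> (\<forall>a. \<forall>x\<in>F a. \<psi> a (eta r a x) = \<phi> a x)
                 \<and> (\<forall>\<psi>'. psh_morphism (LF F r) LFres G g \<psi>'
                         \<and> (\<forall>a. \<forall>x\<in>F a. \<psi>' a (eta r a x) = \<phi> a x)
                       \<longrightarrow> (\<forall>a. \<forall>s\<in>LF F r a. \<psi>' a s = \<psi> a s))))"
proof -
  have c1: "\<forall>a. inj_on (eta r a) (F a)" using eta_inj[OF mono] by blast
  have c2: "separated F r" unfolding separated_def using eta_inj[OF mono] by blast
  have c3: "psh_morphism F r (LF F r) LFres (eta r)" by (rule eta_mor[OF mono])
  have c4: "sheaf (LF F r) LFres" by (rule LF_sheaf[OF mono])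
  have c5: "\<forall>(G :: 'l option \<Rightarrow> 'y set) g \<phi>. sheaf G g \<and> psh_morphism F r G g \<phi> \<longrightarrow>
            (\<exists>\<psi>. psh_morphism (LF F r) LFres G g \<psi>
                 \<and> (\<forall>a. \<forall>x\<in>F a. \<psi> a (eta r a x) = \<phi> a x)
                 \<and> (\<forall>\<psi>'. psh_morphism (LF F r) LFres G g \<psi>'
                         \<and> (\<forall>a. \<forall>x\<in>F a. \<psi>' a (eta r a x) = \<phi> a x)
                       \<longrightarrow> (\<forall>a. \<forall>s\<in>LF F r a. \<psi>' a s = \<psi> a s)))"
  proof (intro allI impI)
    fix G :: "'l option \<Rightarrow> 'y set" and g \<phi>
    assume H: "sheaf G g \<and> psh_morphism F r G g \<phi>"
    show "\<exists>\<psi>. psh_morphism (LF F r) LFres G g \<psi>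
                 \<and> (\<forall>a. \<forall>x\<in>F a. \<psi> a (eta r a x) = \<phi> a x)
                 \<and> (\<forall>\<psi>'. psh_morphism (LF F r) LFres G g \<psi>'
                         \<and> (\<forall>a. \<forall>x\<in>F a. \<psi>' a (eta r a x) = \<phi> a x)
                       \<longrightarrow> (\<forall>a. \<forall>s\<in>LF F r a. \<psi>' a s = \<psi> a s))"
      by (rule univ[OF mono dense conjunct1[OF H] conjunct2[OF H]])
  qed
  show ?thesis using c1 c2 c3 c4 c5 by (intro conjI)
qed

end
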